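(* Define integer matrices $(a(i,j))_{i,j\ge1}$ and $(b(i,j))_{i,j\ge1}$ as follows. The first three rows are (entries listed for $j=1,2,\dots$; all further entries in these rows are $0$): \begin{itemize} \item $a(1,\cdot)=(10,-36,27)$; $a(2,\cdot)=(-8,306,-2160,5508,-5832,2187)$; $a(3,\cdot)=(1,-360,10566,-99144,423549,-944784,1141614,-708588,177147)$; \item $b(1,\cdot)=(-9,252,-891,729)$; $b(2,\cdot)=(1,-378,8613,-54675,138510,-150903,59049)$; $b(3,\cdot)=(0,147,-14553,312255,-2617839,10764414,-23914845,29288304,-18600435,4782969)$. \end{itemize} For $i\ge4$ and $j\ge1$, both $m=a$ and $m=b$ satisfy $$m(i,j)=30m(i-1,j-1)-108m(i-1,j-2)+81m(i-1,j-3)-12m(i-2,j-1)+9m(i-2,j-2)+m(i-3,j-1),$$ with $m(i,j)=0$ whenever $j\le0$. Then for all $i,j\ge1$, $$\pi(a(i,j))\ge\left\lfloor\frac{3j-i-1}{2}\right\rfloor,\qquad \pi(b(i,j))\ge\left\lfloor\frac{3j-i}{2}\right\rfloor.$$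
   Context: For an integer $n$, $\pi(n)$ denotes the $3$-adic order of $n$, with the convention $\pi(0)=\infty$. $\lfloor x\rfloor$ is the largest integer not exceeding $x$. *)

theory Defs
  imports "HOL-Computational_Algebra.Computational_Algebra"
begin

definition rowval :: "int list \<Rightarrow> nat \<Rightarrow> int" where
  "rowval xs j = (if 1 \<le> j \<and> j \<le> length xs then xs ! (j - 1) else 0)"

text \<open>Matrix (m(i,j))_{i,j>=1} with given first three rows and the recurrence for i >= 4.
  Index 0 (row or column) is the zero entry; nat subtraction j - k for k > j lands at
  column 0, matching the convention m(i,j) = 0 for j <= 0.\<close>
fun recmat :: "int list \<Rightarrow> int list \<Rightarrow> int list \<Rightarrow> nat \<Rightarrow> nat \<Rightarrow> int" where
  "recmat r1 r2 r3 0 j = 0"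
| "recmat r1 r2 r3 (Suc 0) j = rowval r1 j"
| "recmat r1 r2 r3 (Suc (Suc 0)) j = rowval r2 j"
| "recmat r1 r2 r3 (Suc (Suc (Suc 0))) j = rowval r3 j"
| "recmat r1 r2 r3 (Suc (Suc (Suc (Suc n)))) j =
     (if j = 0 then 0 else
        30 * recmat r1 r2 r3 (Suc (Suc (Suc n))) (j - 1)
      - 108 * recmat r1 r2 r3 (Suc (Suc (Suc n))) (j - 2)
      + 81 * recmat r1 r2 r3 (Suc (Suc (Suc n))) (j - 3)
      - 12 * recmat r1 r2 r3 (Suc (Suc n)) (j - 1)
      + 9 * recmat r1 r2 r3 (Suc (Suc n)) (j - 2)
      + recmat r1 r2 r3 (Suc n) (j - 1))"

definition mat_a :: "nat \<Rightarrow> nat \<Rightarrow> int" where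
  "mat_a = recmat [10, -36, 27]
                  [-8, 306, -2160, 5508, -5832, 2187]
                  [1, -360, 10566, -99144, 423549, -944784, 1141614, -708588, 177147]"

definition mat_b :: "nat \<Rightarrow> nat \<Rightarrow> int" where
  "mat_b = recmat [-9, 252, -891, 729]
                  [1, -378, 8613, -54675, 138510, -150903, 59049]
                  [0, 147, -14553, 312255, -2617839, 10764414, -23914845, 29288304, -18600435, 4782969]"

text \<open>pi(n) >= k with the convention pi(0) = infinity.\<close>
definition pi3_ge :: "int \<Rightarrow> int \<Rightarrow> bool" where
  "pi3_ge n k = (n = 0 \<or> k \<le> int (multiplicity (3::int) n))"

end

theory Submission
  imports Defs
begin

lemma recmat_col0: "recmat r1 r2 r3 i 0 = 0"
  by (induction r1 r2 r3 i "0::nat" rule: recmat.induct) (auto simp: rowval_def)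

lemma term_dvd:
  fixes x c :: int and a b :: int and k :: nat
  assumes "(3::int) ^ k dvd c" "(3::int) ^ nat a dvd x" "b \<le> a + int k"
  shows "(3::int) ^ nat b dvd c * x"
proof -
  have "(3::int) ^ (k + nat a) dvd c * x"
    using mult_dvd_mono[OF assms(1,2)] by (simp add: power_add)
  moreover have "nat b \<le> k + nat a" using assms(3) by linarith
  ultimately show ?thesis using power_le_dvd by blast
qed

lemma shift_dvd:
  fixes M :: "nat \<Rightarrow> nat \<Rightarrow> int" and c :: int
  assumes "M i' 0 = 0"
    and "(3::int) ^ nat ((3 * int (j - k) - int i' - c) div 2) dvd M i' (j - k)"
  shows "(3::int) ^ nat ((3 * (int j - int k) - int i' - c) div 2) dvd M i' (j - k)"
proof (cases "k \<le> j")
  case True then show ?thesis using assms(2) by (simp add: of_nat_diff)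
next
  case False then have "j - k = 0" by simp
  then show ?thesis using assms(1) by simp
qed

lemma recmat_dvd:
  fixes c :: int
  assumes h1: "\<And>j. (3::int) ^ nat ((3 * int j - 1 - c) div 2) dvd rowval r1 j"
    and h2: "\<And>j. (3::int) ^ nat ((3 * int j - 2 - c) div 2) dvd rowval r2 j"
    and h3: "\<And>j. (3::int) ^ nat ((3 * int j - 3 - c) div 2) dvd rowval r3 j"
  shows "i \<ge> 1 \<Longrightarrow> (3::int) ^ nat ((3 * int j - int i - c) div 2) dvd recmat r1 r2 r3 i j"
proof (induction i arbitrary: j rule: less_induct)
  case (less i)
  let ?M = "recmat r1 r2 r3"
  have z: "\<And>i'. ?M i' 0 = 0" by (rule recmat_col0)
  consider "i = 1" | "i = 2" | "i = 3" | n where "i = Suc (Suc (Suc (Suc n)))"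
    using less.prems by (metis One_nat_def Suc_1 Suc_le_D numeral_3_eq_3 not0_implies_Suc le_zero_eq)
  then show ?case
  proof cases
    case 1 then show ?thesis using h1[of j] by simp
  next
    case 2 then show ?thesis using h2[of j] by (simp add: numeral_2_eq_2)
  next
    case 3 then show ?thesis using h3[of j] by (simp add: numeral_3_eq_3)
  next
    case (4 n)
    show ?thesis
    proof (cases "j = 0")
      case True then show ?thesis using z by simp
    next
      case False
      define E where "E = (3 * int j - int i - c) div 2"
      have IH: "\<And>i' k. i' < i \<Longrightarrow> i' \<ge> 1 \<Longrightarrow>
          (3::int) ^ nat ((3 * (int j - int k) - int i' - c) div 2) dvd ?M i' (j - k)"
        by (rule shift_dvd[where M="?M", OF z], rule less.IH) auto
      have A: "(3::int) ^ nat E dvd 30 * ?M (i - 1) (j - 1)"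
        by (rule term_dvd[where k=1]) (use IH[of "i-1" 1] 4 in \<open>auto simp: E_def\<close>)
      have B: "(3::int) ^ nat E dvd 108 * ?M (i - 1) (j - 2)"
        by (rule term_dvd[where k=3]) (use IH[of "i-1" 2] 4 in \<open>auto simp: E_def\<close>)
      have C: "(3::int) ^ nat E dvd 81 * ?M (i - 1) (j - 3)"
        by (rule term_dvd[where k=4]) (use IH[of "i-1" 3] 4 in \<open>auto simp: E_def\<close>)
      have D: "(3::int) ^ nat E dvd 12 * ?M (i - 2) (j - 1)"
        by (rule term_dvd[where k=1]) (use IH[of "i-2" 1] 4 in \<open>auto simp: E_def\<close>)
      have F: "(3::int) ^ nat E dvd 9 * ?M (i - 2) (j - 2)"
        by (rule term_dvd[where k=2]) (use IH[of "i-2" 2] 4 in \<open>auto simp: E_def\<close>)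
      have G: "(3::int) ^ nat E dvd 1 * ?M (i - 3) (j - 1)"
        by (rule term_dvd[where k=0]) (use IH[of "i-3" 1] 4 in \<open>auto simp: E_def\<close>)
      have eq: "?M i j = 30 * ?M (i - 1) (j - 1) - 108 * ?M (i - 1) (j - 2)
          + 81 * ?M (i - 1) (j - 3) - 12 * ?M (i - 2) (j - 1) + 9 * ?M (i - 2) (j - 2)
          + 1 * ?M (i - 3) (j - 1)"
        using 4 False by (simp add: numeral_2_eq_2 numeral_3_eq_3)
      show ?thesis unfolding E_def[symmetric] eq
        by (intro dvd_add dvd_diff A B C D F G)
    qed
  qed
qed

lemma pi3_geI: "(3::int) ^ nat k dvd n \<Longrightarrow> pi3_ge n k"
  unfolding pi3_ge_def
proof (cases "n = 0 \<or> k \<le> 0")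
  case False
  assume "(3::int) ^ nat k dvd n"
  then have "nat k \<le> multiplicity 3 n"
    using False by (intro multiplicity_geI) auto
  then show "n = 0 \<or> k \<le> int (multiplicity 3 n)" using False by linarith
qed auto

lemma rowval_big: "j > length xs \<Longrightarrow> rowval xs j = 0"
  by (simp add: rowval_def)

lemma rowval_0: "rowval xs 0 = 0"
  by (simp add: rowval_def)

theorem theorem3p1:
  fixes i j :: nat
  assumes "i \<ge> 1" and "j \<ge> 1"
  shows "pi3_ge (mat_a i j) \<lfloor>(3 * real j - real i - 1) / 2\<rfloor>
       \<and> pi3_ge (mat_b i j) \<lfloor>(3 * real j - real i) / 2\<rfloor>"
proof -
  have fa: "\<lfloor>(3 * real j - real i - 1) / 2\<rfloor> = (3 * int j - int i - 1) div 2"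
    using floor_divide_of_int_eq[of "3 * int j - int i - 1" 2] by simp
  have fb: "\<lfloor>(3 * real j - real i) / 2\<rfloor> = (3 * int j - int i - 0) div 2"
    using floor_divide_of_int_eq[of "3 * int j - int i" 2] by simp
  have A: "(3::int) ^ nat ((3 * int j - int i - 1) div 2) dvd mat_a i j"
    unfolding mat_a_def
  proof (rule recmat_dvd[OF _ _ _ assms(1)])
    fix j :: nat
    show "(3::int) ^ nat ((3 * int j - 1 - 1) div 2) dvd rowval [10, -36, 27] j"
    proof (cases "j < 4")
      case True then have "j \<in> {..<4}" by simp
      then show ?thesis by (simp add: lessThan_nat_numeral rowval_def del: lessThan_iff, elim disjE) simp_all
    qed (simp add: rowval_def)
    show "(3::int) ^ nat ((3 * int j - 2 - 1) div 2) dvd rowval [-8, 306, -2160, 5508, -5832, 2187] j"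
    proof (cases "j < 7")
      case True then have "j \<in> {..<7}" by simp
      then show ?thesis by (simp add: lessThan_nat_numeral rowval_def del: lessThan_iff, elim disjE) simp_all
    qed (simp add: rowval_def)
    show "(3::int) ^ nat ((3 * int j - 3 - 1) div 2) dvd rowval [1, -360, 10566, -99144, 423549, -944784, 1141614, -708588, 177147] j"
    proof (cases "j < 10")
      case True then have "j \<in> {..<10}" by simp
      then show ?thesis by (simp add: lessThan_nat_numeral rowval_def del: lessThan_iff, elim disjE) simp_all
    qed (simp add: rowval_def)
  qed
  have B: "(3::int) ^ nat ((3 * int j - int i - 0) div 2) dvd mat_b i j"
    unfolding mat_b_def
  proof (rule recmat_dvd[OF _ _ _ assms(1)])
    fix j :: nat
    show "(3::int) ^ nat ((3 * int j - 1 - 0) div 2) dvd rowval [-9, 252, -891, 729] j"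
    proof (cases "j < 5")
      case True then have "j \<in> {..<5}" by simp
      then show ?thesis by (simp add: lessThan_nat_numeral rowval_def del: lessThan_iff, elim disjE) simp_all
    qed (simp add: rowval_def)
    show "(3::int) ^ nat ((3 * int j - 2 - 0) div 2) dvd rowval [1, -378, 8613, -54675, 138510, -150903, 59049] j"
    proof (cases "j < 8")
      case True then have "j \<in> {..<8}" by simp
      then show ?thesis by (simp add: lessThan_nat_numeral rowval_def del: lessThan_iff, elim disjE) simp_all
    qed (simp add: rowval_def)
    show "(3::int) ^ nat ((3 * int j - 3 - 0) div 2) dvd rowval [0, 147, -14553, 312255, -2617839, 10764414, -23914845, 29288304, -18600435, 4782969] j"
    proof (cases "j < 11")
      case True then have "j \<in> {..<11}" by simp
      then show ?thesis by (simp add: lessThan_nat_numeral rowval_def del: lessThan_iff, elim disjE) simp_all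
    qed (simp add: rowval_def)
  qed
  show ?thesis unfolding fa fb using pi3_geI A B by blast
qed

end
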